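(* Let $\xi>0$, $\tau>0$, $A_n:=\xi\tau^n n!$ for $n\ge1$, and $R_\ell>0$ for $\ell\ge1$. Define $\Gamma^{[\ell]}_n$ and $\mathbb{B}^{[\ell]}_{n,\lambda}$ recursively by $\Gamma^{[1]}_n:=A_n$ ($n\ge1$); $\Gamma^{[\ell]}_n:=\sum_{\lambda=1}^nA_\lambda R_{\ell-1}^\lambda\mathbb{B}^{[\ell-1]}_{n,\lambda}$ ($\ell\ge2$, $n\ge1$); $\mathbb{B}^{[\ell]}_{n,1}:=\Gamma^{[\ell]}_n$ ($n\ge1$); $\mathbb{B}^{[\ell]}_{n,\lambda}:=\sum_{i=\lambda-1}^{n-1}\binom{n-1}{i}\Gamma^{[\ell]}_{n-i}\mathbb{B}^{[\ell]}_{i,\lambda-1}$ ($\ell\ge1$, $n\ge\lambda\ge2$). Let $P_0:=1$ and $P_k:=\prod_{t=1}^k(\xi\tau R_t)$ for $k\ge1$. Then $$\Gamma^{[\ell]}_n=\mathbb{B}^{[\ell]}_{n,1}=P_{\ell-1}\Big(\sum_{k=0}^{\ell-1}P_k\Big)^{n-1}\xi\,\tau^n\,n!\quad\text{for }\ell\ge1,\ n\ge1,$$ $$\mathbb{B}^{[\ell]}_{n,\lambda}=P_{\ell-1}^\lambda\Big(\sum_{k=0}^{\ell-1}P_k\Big)^{n-\lambda}\xi^\lambda\,\tau^n\,\frac{n!}{\lambda!}\binom{n-1}{\lambda-1}\quad\text{for }\ell\ge1,\ n\ge\lambda\ge1.$$ *)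

theory Defs
  imports Complex_Main
begin

definition Aseq :: "real \<Rightarrow> real \<Rightarrow> nat \<Rightarrow> real" where
  "Aseq xi tau n = xi * tau ^ n * fact n"

text \<open>Given the sequence g = Gamma^[l], the array B^[l]_{n,lambda}:
  B_{n,1} = g n;  B_{n,lambda} = sum_{i=lambda-1}^{n-1} (n-1 choose i) g(n-i) B_{i,lambda-1}
  for lambda >= 2.  The value at lambda = 0 is an unused convention.\<close>
fun Bop :: "(nat \<Rightarrow> real) \<Rightarrow> nat \<Rightarrow> nat \<Rightarrow> real" where
  "Bop g n 0 = 0"
| "Bop g n (Suc 0) = g n"
| "Bop g n (Suc (Suc k)) =
     (\<Sum>i = Suc k..n - 1. real ((n - 1) choose i) * g (n - i) * Bop g i (Suc k))"

text \<open>Gamma^[l]_n, indexed by l >= 1 (the value at l = 0 is an unused convention):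
  Gamma^[1]_n = A_n;  Gamma^[l]_n = sum_{lambda=1}^n A_lambda R_{l-1}^lambda B^[l-1]_{n,lambda}.\<close>
primrec Gam :: "real \<Rightarrow> real \<Rightarrow> (nat \<Rightarrow> real) \<Rightarrow> nat \<Rightarrow> nat \<Rightarrow> real" where
  "Gam xi tau R 0 = (\<lambda>n. 0)"
| "Gam xi tau R (Suc l) =
     (if l = 0 then Aseq xi tau
      else (\<lambda>n. \<Sum>lam = 1..n. Aseq xi tau lam * R l ^ lam * Bop (Gam xi tau R l) n lam))"

definition BB :: "real \<Rightarrow> real \<Rightarrow> (nat \<Rightarrow> real) \<Rightarrow> nat \<Rightarrow> nat \<Rightarrow> nat \<Rightarrow> real" where
  "BB xi tau R l n lam = Bop (Gam xi tau R l) n lam"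

definition Pprod :: "real \<Rightarrow> real \<Rightarrow> (nat \<Rightarrow> real) \<Rightarrow> nat \<Rightarrow> real" where
  "Pprod xi tau R k = (\<Prod>t = 1..k. xi * tau * R t)"

end

theory Submission imports Defs begin

lemma hockey: "(\<Sum>i = Suc k..N. (i - 1) choose k) = N choose Suc k"
proof (induction N)
  case 0 then show ?case by simp
next
  case (Suc N)
  show ?case
  proof (cases "Suc N < Suc k")
    case True then show ?thesis by (simp add: sum.cl_ivl_Suc binomial_eq_0)
  next
    case False then show ?thesis using Suc by (simp add: sum.cl_ivl_Suc)
  qed
qed

lemma comb_id: "(\<Sum>i = Suc k..N. (Suc N - i) * ((i - 1) choose k)) = Suc N choose (Suc (Suc k))"
proof (induction N)
  case 0 then show ?case by simp
next
  case (Suc N)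
  show ?case
  proof (cases "Suc N < Suc k")
    case True then show ?thesis by (simp add: sum.cl_ivl_Suc binomial_eq_0)
  next
    case False
    have "(\<Sum>i = Suc k..N. (Suc (Suc N) - i) * ((i - 1) choose k))
        = (\<Sum>i = Suc k..N. (Suc N - i) * ((i - 1) choose k) + ((i - 1) choose k))"
      by (rule sum.cong) (auto simp: Suc_diff_le)
    also have "\<dots> = (Suc N choose Suc (Suc k)) + (N choose Suc k)"
      unfolding sum.distrib Suc.IH hockey ..
    finally show ?thesis using False by (simp add: sum.cl_ivl_Suc)
  qed
qed

lemma term_eq:
  fixes C a tau :: real
  assumes "i = Suc k + e" "n = Suc (i + d)"
  shows "real ((n - 1) choose i) * (C * a ^ (n - i - 1) * tau ^ (n - i) * fact (n - i)) *
     (C ^ Suc k * a ^ (i - Suc k) * tau ^ i * (fact i / fact (Suc k)) * real ((i - 1) choose k))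
   = C ^ Suc (Suc k) * a ^ (n - Suc (Suc k)) * tau ^ n * (fact (n - 1) / fact (Suc k))
     * real ((n - i) * ((i - 1) choose k))"
proof -
  have b: "real ((i + d) choose i) = fact (i + d) / (fact i * fact d)"
    by (simp add: binomial_fact)
  have e1: "n - 1 = i + d" "n - i - 1 = d" "n - i = Suc d" "i - Suc k = e" "n - Suc (Suc k) = e + d"
    using assms by auto
  have f: "fact (Suc d) = real (Suc d) * fact d" by simp
  have fi: "fact i \<noteq> (0::real)" "fact d \<noteq> (0::real)" by auto
  have tn: "tau ^ n = tau ^ i * tau * tau ^ d" using assms by (simp add: power_add)
  show ?thesis unfolding e1 b f of_nat_mult tn
    apply (simp only: power_add power_Suc)
    using fi by (simp add: divide_simps)
qed

lemma Bop_closed: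
  fixes C a tau :: real
  assumes g: "\<And>n. n \<ge> 1 \<Longrightarrow> g n = C * a ^ (n - 1) * tau ^ n * fact n"
  shows "\<forall>n. Suc k \<le> n \<longrightarrow> Bop g n (Suc k) = C ^ Suc k * a ^ (n - Suc k) * tau ^ n
            * (fact n / fact (Suc k)) * real ((n - 1) choose k)"
proof (induction k)
  case 0 then show ?case using g by simp
next
  case (Suc k)
  show ?case
  proof (intro allI impI)
    fix n assume n: "Suc (Suc k) \<le> n"
    have "Bop g n (Suc (Suc k)) = (\<Sum>i = Suc k..n - 1. real ((n - 1) choose i) * g (n - i) * Bop g i (Suc k))"
      by simp
    also have "\<dots> = (\<Sum>i = Suc k..n - 1. C ^ Suc (Suc k) * a ^ (n - Suc (Suc k)) * tau ^ n * (fact (n - 1) / fact (Suc k))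
     * real ((n - i) * ((i - 1) choose k)))"
    proof (rule sum.cong[OF refl])
      fix i assume i: "i \<in> {Suc k..n - 1}"
      obtain e where e: "i = Suc k + e" using i by (metis atLeastAtMost_iff le_Suc_ex)
      obtain d where d: "n = Suc (i + d)" using i n
        by (metis Suc_diff_1 add_Suc_right atLeastAtMost_iff le_Suc_ex le_imp_less_Suc less_le_trans not_less_eq_eq zero_less_Suc)
      have "g (n - i) = C * a ^ (n - i - 1) * tau ^ (n - i) * fact (n - i)" using g d by simp
      moreover have "Bop g i (Suc k) = C ^ Suc k * a ^ (i - Suc k) * tau ^ i * (fact i / fact (Suc k)) * real ((i - 1) choose k)"
        using Suc i by auto
      ultimately show "real ((n - 1) choose i) * g (n - i) * Bop g i (Suc k) = C ^ Suc (Suc k) * a ^ (n - Suc (Suc k)) * tau ^ n * (fact (n - 1) / fact (Suc k))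
     * real ((n - i) * ((i - 1) choose k))"
        using term_eq[OF e d, of C a tau] by simp
    qed
    also have "\<dots> = C ^ Suc (Suc k) * a ^ (n - Suc (Suc k)) * tau ^ n * (fact (n - 1) / fact (Suc k))
       * real (\<Sum>i = Suc k..n - 1. (n - i) * ((i - 1) choose k))"
      by (simp add: sum_distrib_left del: of_nat_mult)
    finally have B0: "Bop g n (Suc (Suc k)) = C ^ Suc (Suc k) * a ^ (n - Suc (Suc k)) * tau ^ n * (fact (n - 1) / fact (Suc k))
       * real (\<Sum>i = Suc k..n - 1. (n - i) * ((i - 1) choose k))" .
    obtain N where N: "n = Suc N" using n by (metis Suc_le_D)
    have Seq: "(\<Sum>i = Suc k..n - 1. (n - i) * ((i - 1) choose k)) = n choose Suc (Suc k)"
      using comb_id N by simp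
    have idt: "real (n choose Suc (Suc k)) * (fact (n - 1) / fact (Suc k))
        = (fact n / fact (Suc (Suc k))) * real ((n - 1) choose Suc k)"
    proof -
      have "Suc (Suc k) * (Suc N choose Suc (Suc k)) = Suc N * (N choose Suc k)"
        by (rule Suc_times_binomial)
      hence h: "real (Suc (Suc k)) * real (Suc N choose Suc (Suc k)) = real (Suc N) * real (N choose Suc k)"
        by (metis of_nat_mult)
      have h': "real (Suc N choose Suc (Suc k)) = real (Suc N) * real (N choose Suc k) / real (Suc (Suc k))"
        using h by (simp add: field_simps del: of_nat_Suc)
      have fs: "fact (Suc N) = real (Suc N) * fact N" "fact (Suc (Suc k)) = real (Suc (Suc k)) * fact (Suc k)"
        by (simp_all del: of_nat_Suc)
      have nz: "fact N \<noteq> (0::real)" "fact (Suc k) \<noteq> (0::real)" "real (Suc (Suc k)) \<noteq> 0" by auto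
      show ?thesis unfolding N h' fs using nz
        by (simp del: of_nat_Suc add: divide_simps)
    qed
    from B0 have B: "Bop g n (Suc (Suc k)) = C ^ Suc (Suc k) * a ^ (n - Suc (Suc k)) * tau ^ n * (fact (n - 1) / fact (Suc k))
       * real (n choose Suc (Suc k))" unfolding Seq .
    have "C ^ Suc (Suc k) * a ^ (n - Suc (Suc k)) * tau ^ n * (fact (n - 1) / fact (Suc k))
       * real (n choose Suc (Suc k)) = (C ^ Suc (Suc k) * a ^ (n - Suc (Suc k)) * tau ^ n) * (real (n choose Suc (Suc k)) * (fact (n - 1) / fact (Suc k)))"
      by (simp only: mult_ac)
    also have "\<dots> = (C ^ Suc (Suc k) * a ^ (n - Suc (Suc k)) * tau ^ n) * ((fact n / fact (Suc (Suc k))) * real ((n - 1) choose Suc k))"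
      unfolding idt ..
    finally show "Bop g n (Suc (Suc k)) = C ^ Suc (Suc k) * a ^ (n - Suc (Suc k)) * tau ^ n
            * (fact n / fact (Suc (Suc k))) * real ((n - 1) choose Suc k)"
      unfolding B by (simp only: mult.assoc)
  qed
qed


lemma Gam_closed:
  "\<forall>n\<ge>1. Gam xi tau R (Suc l) n = Pprod xi tau R l * (\<Sum>k = 0..l. Pprod xi tau R k) ^ (n - 1) * xi * tau ^ n * fact n"
proof (induction l)
  case 0 then show ?case by (simp add: Aseq_def Pprod_def)
next
  case (Suc l)
  define P where "P = Pprod xi tau R l"
  define S where "S = (\<Sum>k = 0..l. Pprod xi tau R k)"
  define Q where "Q = Pprod xi tau R (Suc l)"
  have Q: "Q = P * (xi * tau * R (Suc l))" unfolding Q_def P_def Pprod_def by simp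
  have S2: "(\<Sum>k = 0..Suc l. Pprod xi tau R k) = Q + S" unfolding S_def Q_def by simp
  have g: "\<And>n. n \<ge> 1 \<Longrightarrow> Gam xi tau R (Suc l) n = (P * xi) * S ^ (n - 1) * tau ^ n * fact n"
    using Suc unfolding P_def S_def by (simp add: algebra_simps)
  note BC = Bop_closed[of "Gam xi tau R (Suc l)", OF g]
  show ?case
  proof (intro allI impI)
    fix n :: nat assume n: "n \<ge> 1"
    then obtain m where m: "n = Suc m" by (metis Suc_le_D One_nat_def)
    have "Gam xi tau R (Suc (Suc l)) n = (\<Sum>lam = 1..n. Aseq xi tau lam * R (Suc l) ^ lam * Bop (Gam xi tau R (Suc l)) n lam)"
      by simp
    also have "\<dots> = (\<Sum>j = 0..m. Aseq xi tau (Suc j) * R (Suc l) ^ Suc j * Bop (Gam xi tau R (Suc l)) n (Suc j))"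
      unfolding m One_nat_def sum.shift_bounds_cl_Suc_ivl ..
    also have "\<dots> = (\<Sum>j = 0..m. (xi * tau ^ n * fact n * Q) * (real (m choose j) * Q ^ j * S ^ (m - j)))"
    proof (rule sum.cong[OF refl])
      fix j assume j: "j \<in> {0..m}"
      have bop: "Bop (Gam xi tau R (Suc l)) n (Suc j) = (P * xi) ^ Suc j * S ^ (m - j) * tau ^ n * (fact n / fact (Suc j)) * real (m choose j)"
        using BC j m by (auto simp del: Gam.simps)
      have tn: "tau ^ n = tau ^ Suc j * tau ^ (m - j)" using j m by (simp flip: power_add)
      have fz: "fact (Suc j) \<noteq> (0::real)" by (rule fact_nonzero)
      show "Aseq xi tau (Suc j) * R (Suc l) ^ Suc j * Bop (Gam xi tau R (Suc l)) n (Suc j) =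
          (xi * tau ^ n * fact n * Q) * (real (m choose j) * Q ^ j * S ^ (m - j))"
        unfolding bop Aseq_def Q tn using fz by (simp add: power_mult_distrib field_simps del: fact_Suc)
    qed
    also have "\<dots> = (xi * tau ^ n * fact n * Q) * (Q + S) ^ m"
      unfolding binomial_ring sum_distrib_left atLeast0AtMost ..
    finally show "Gam xi tau R (Suc (Suc l)) n = Pprod xi tau R (Suc l) * (\<Sum>k = 0..Suc l. Pprod xi tau R k) ^ (n - 1) * xi * tau ^ n * fact n"
      unfolding S2 Q_def[symmetric] m by (simp add: algebra_simps)
  qed
qed

theorem lemma6p3:
  fixes xi tau :: real and R :: "nat \<Rightarrow> real"
  assumes "xi > 0" and "tau > 0" and "\<And>l. l \<ge> 1 \<Longrightarrow> R l > 0"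
  shows "(\<forall>l n. l \<ge> 1 \<and> n \<ge> 1 \<longrightarrow>
            Gam xi tau R l n = BB xi tau R l n 1 \<and>
            BB xi tau R l n 1 =
              Pprod xi tau R (l - 1) * (\<Sum>k = 0..l - 1. Pprod xi tau R k) ^ (n - 1)
              * xi * tau ^ n * fact n)
       \<and> (\<forall>l n lam. l \<ge> 1 \<and> 1 \<le> lam \<and> lam \<le> n \<longrightarrow>
            BB xi tau R l n lam =
              Pprod xi tau R (l - 1) ^ lam * (\<Sum>k = 0..l - 1. Pprod xi tau R k) ^ (n - lam)
              * xi ^ lam * tau ^ n * (fact n / fact lam) * real ((n - 1) choose (lam - 1)))"
proof (intro conjI allI impI)
  fix l n :: nat assume h: "l \<ge> 1 \<and> n \<ge> 1"
  then obtain l' where l: "l = Suc l'" by (metis Suc_le_D One_nat_def)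
  show "Gam xi tau R l n = BB xi tau R l n 1" unfolding BB_def by simp
  show "BB xi tau R l n 1 = Pprod xi tau R (l - 1) * (\<Sum>k = 0..l - 1. Pprod xi tau R k) ^ (n - 1) * xi * tau ^ n * fact n"
    using Gam_closed[of xi tau R l'] h unfolding BB_def l by (simp del: Gam.simps)
next
  fix l n lam :: nat assume h: "l \<ge> 1 \<and> 1 \<le> lam \<and> lam \<le> n"
  then obtain l' where l: "l = Suc l'" by (metis Suc_le_D One_nat_def)
  obtain j where j: "lam = Suc j" using h by (metis Suc_le_D One_nat_def)
  define P where "P = Pprod xi tau R l'"
  define S where "S = (\<Sum>k = 0..l'. Pprod xi tau R k)"
  have g: "\<And>n. n \<ge> 1 \<Longrightarrow> Gam xi tau R (Suc l') n = (P * xi) * S ^ (n - 1) * tau ^ n * fact n"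
    using Gam_closed[of xi tau R l'] unfolding P_def S_def by (simp add: algebra_simps del: Gam.simps)
  have "Bop (Gam xi tau R (Suc l')) n (Suc j) = (P * xi) ^ Suc j * S ^ (n - Suc j) * tau ^ n * (fact n / fact (Suc j)) * real ((n - 1) choose j)"
    using Bop_closed[of "Gam xi tau R (Suc l')", OF g, of j] h j by (simp del: Gam.simps)
  then show "BB xi tau R l n lam =
              Pprod xi tau R (l - 1) ^ lam * (\<Sum>k = 0..l - 1. Pprod xi tau R k) ^ (n - lam)
              * xi ^ lam * tau ^ n * (fact n / fact lam) * real ((n - 1) choose (lam - 1))"
    unfolding BB_def l j P_def S_def by (simp add: power_mult_distrib algebra_simps del: Gam.simps)
qed

end
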